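(* Let $\pi,\pi'$ be probability distributions on the nonnegative integers and let $\mathbf A,\mathbf A'\subseteq\mathbb R^d$ be the limiting shapes of the frog model on $\mathbb Z^d$ with i.i.d.-$\pi$ and i.i.d.-$\pi'$ sleeping frogs per site, respectively. If $\pi\preceq_{\mathrm{pgf}}\pi'$, then $\mathbf A\subseteq\mathbf A'$.
   Context: Frog model on $\mathbb Z^d$ (discrete time): one active frog at the origin and i.i.d.-$\pi$ sleeping frogs at each other site; active frogs perform independent simple random walks, and a frog woken at time $s$ is at step $j$ of its walk at time $s+j$; when an active frog visits a site with sleeping frogs, all activate. Let $\xi_n$ be the union of the cubes $x+(-1/2,1/2]^d$ over sites $x$ visited by time $n$. The limiting shape is the convex set $\mathbf A$ (known to exist) such that for every $0<\epsilon<1$, almost surely $(1-\epsilon)\mathbf A\subseteq\xi_n/n\subseteq(1+\epsilon)\mathbf A$ for all sufficiently large $n$. For distributions of $X,Y$ on $[0,\infty]$, $X\preceq_{\mathrm{pgf}}Y$ means $\mathbf E t^X\ge\mathbf E t^Y$ for all $t\in(0,1)$. *)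

theory Defs
  imports "HOL-Probability.Probability"
begin

definition unit_steps :: "(int^'d) set" where
  "unit_steps = {v. \<exists>i. v = axis i 1 \<or> v = axis i (-1)}"

text \<open>Randomness of the frog model: eta x = number of sleeping frogs at site x
  (the value at the origin is ignored: there is exactly one, active, frog there);
  X (x, i, k) = (k+1)-th increment of the walk of the i-th frog at site x.\<close>

definition frog_space ::
  "nat pmf \<Rightarrow> ((int^'d \<Rightarrow> nat) \<times> ((int^'d) \<times> nat \<times> nat \<Rightarrow> int^'d)) measure" where
  "frog_space \<pi> =
     (PiM UNIV (\<lambda>_. measure_pmf \<pi>)) \<Otimes>\<^sub>M
     (PiM UNIV (\<lambda>_. measure_pmf (pmf_of_set unit_steps)))"

definition frogs_at :: "(int^'d \<Rightarrow> nat) \<Rightarrow> int^'d \<Rightarrow> nat" where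
  "frogs_at eta y = (if y = 0 then 1 else eta y)"

definition walk :: "((int^'d) \<times> nat \<times> nat \<Rightarrow> int^'d) \<Rightarrow> int^'d \<Rightarrow> nat \<Rightarrow> nat \<Rightarrow> int^'d" where
  "walk X x i j = (\<Sum>k<j. X (x, i, k))"

text \<open>The first reaching
  time of each site coincides with its first visit time in the frog model (frogs woken
  at the first visit time are ahead of any later-started copies), hence the set of sites
  visited by time n is exactly the set of sites reached at some time <= n.\<close>

inductive reached :: "(int^'d \<Rightarrow> nat) \<Rightarrow> ((int^'d) \<times> nat \<times> nat \<Rightarrow> int^'d) \<Rightarrow> int^'d \<Rightarrow> nat \<Rightarrow> bool"
  for eta X where
  origin: "reached eta X 0 0"
| step: "reached eta X y s \<Longrightarrow> i < frogs_at eta y \<Longrightarrow> reached eta X (y + walk X y i j) (s + j)"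

definition visited :: "(int^'d \<Rightarrow> nat) \<Rightarrow> ((int^'d) \<times> nat \<times> nat \<Rightarrow> int^'d) \<Rightarrow> nat \<Rightarrow> (int^'d) set" where
  "visited eta X n = {x. \<exists>s\<le>n. reached eta X x s}"

definition cube :: "int^'d \<Rightarrow> (real^'d) set" where
  "cube x = {p. \<forall>i. real_of_int (x $ i) - 1/2 < p $ i \<and> p $ i \<le> real_of_int (x $ i) + 1/2}"

definition xi :: "(int^'d \<Rightarrow> nat) \<Rightarrow> ((int^'d) \<times> nat \<times> nat \<Rightarrow> int^'d) \<Rightarrow> nat \<Rightarrow> (real^'d) set" where
  "xi eta X n = (\<Union>x\<in>visited eta X n. cube x)"

text \<open>A is the limiting shape (taken closed, which makes it unique).\<close>

definition is_limit_shape :: "nat pmf \<Rightarrow> (real^'d) set \<Rightarrow> bool" where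
  "is_limit_shape \<pi> A \<longleftrightarrow> convex A \<and> closed A \<and>
     (\<forall>\<epsilon>::real. 0 < \<epsilon> \<and> \<epsilon> < 1 \<longrightarrow>
        (AE \<omega> in frog_space \<pi>. eventually (\<lambda>n.
            (\<lambda>p. (1 - \<epsilon>) *\<^sub>R p) ` A \<subseteq> (\<lambda>p. (1 / real n) *\<^sub>R p) ` xi (fst \<omega>) (snd \<omega>) n \<and>
            (\<lambda>p. (1 / real n) *\<^sub>R p) ` xi (fst \<omega>) (snd \<omega>) n \<subseteq> (\<lambda>p. (1 + \<epsilon>) *\<^sub>R p) ` A)
          sequentially))"

definition pgf_le :: "nat pmf \<Rightarrow> nat pmf \<Rightarrow> bool" where
  "pgf_le \<pi> \<pi>' \<longleftrightarrow> (\<forall>t::real. 0 < t \<and> t < 1 \<longrightarrow>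
     measure_pmf.expectation \<pi> (\<lambda>k. t ^ k) \<ge> measure_pmf.expectation \<pi>' (\<lambda>k. t ^ k))"

end

theory Submission
  imports Defs
begin

lemma reached_sim:
  assumes "reached eta X x s"
    and "\<And>z i. i < frogs_at eta z \<Longrightarrow> \<exists>i'. i' < frogs_at eta' z \<and> (\<forall>j. walk X' z i' j = walk X z i j)"
  shows "reached eta' X' x s"
  using assms(1)
proof induction
  case origin then show ?case by (rule reached.origin)
next
  case (step y s i j)
  then obtain i' where "i' < frogs_at eta' y" "walk X' y i' j = walk X y i j" using assms(2) by blast
  with reached.step[OF step.IH this(1), of j] show ?case by simp
qed

lemma reached_mono_frogs:
  assumes "reached eta X x s" "\<And>z. frogs_at eta z \<le> frogs_at eta' z"
  shows "reached eta' X x s"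
  by (rule reached_sim[OF assms(1)]) (use assms(2) less_le_trans in blast)

lemma reached_first:
  assumes "reached eta X x s" "y \<noteq> 0"
  shows "reached (eta(y:=0)) X x s \<or> (\<exists>s'\<le>s. reached (eta(y:=0)) X y s')"
  using assms(1)
proof induction
  case origin then show ?case by (simp add: reached.origin)
next
  case (step z s i j)
  show ?case
  proof (cases "z = y")
    case True
    with step.IH show ?thesis by (meson le_add1 order.trans)
  next
    case False
    from step.IH show ?thesis
    proof
      assume "reached (eta(y := 0)) X z s"
      moreover have "i < frogs_at (eta(y := 0)) z" using step.hyps False by (auto simp add: frogs_at_def)
      ultimately show ?thesis using reached.step by blast
    next
      assume "\<exists>s'\<le>s. reached (eta(y := 0)) X y s'"
      then show ?thesis by (meson le_add1 order.trans)
    qed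
  qed
qed

definition Xfrog :: "((int^'d) \<times> nat \<times> nat \<Rightarrow> int^'d) \<Rightarrow> int^'d \<Rightarrow> nat \<Rightarrow> ((int^'d) \<times> nat \<times> nat \<Rightarrow> int^'d)" where
  "Xfrog X y i = (\<lambda>(z,l,k). if z = y then X (y,i,k) else X (z,l,k))"

lemma reached_mono_time:
  assumes "reached eta X x s" shows "reached eta X x s"
  using assms .

lemma reached_decomp:
  assumes "reached eta X x s" "y \<noteq> 0"
  shows "reached (eta(y:=0)) X x s \<or> (\<exists>i<eta y. \<exists>s'\<le>s. reached (eta(y:=1)) (Xfrog X y i) x s')"
  using assms(1)
proof induction
  case origin then show ?case by (simp add: reached.origin)
next
  case (step z s i j)
  show ?case
  proof (cases "z = y")
    case True
    have iy: "i < eta y" using step.hyps True assms(2) by (simp add: frogs_at_def)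
    have "\<exists>s'\<le>s. reached (eta(y:=0)) X y s'"
      using step.IH
    proof
      assume "reached (eta(y := 0)) X z s" then show ?thesis using True by blast
    next
      assume "\<exists>i<eta y. \<exists>s'\<le>s. reached (eta(y := 1)) (Xfrog X y i) z s'"
      then obtain i' s' where "s' \<le> s" "reached (eta(y := 1)) (Xfrog X y i') y s'" using True by blast
      from reached_first[OF this(2) assms(2)] this(1) show ?thesis
      proof (elim disjE exE conjE)
        assume r: "reached ((eta(y := 1))(y := 0)) (Xfrog X y i') y s'"
        have "reached (eta(y := 0)) X y s'"
          by (rule reached_sim[OF r]) (use assms(2) in \<open>auto simp: frogs_at_def walk_def Xfrog_def\<close>)
        then show ?thesis using \<open>s' \<le> s\<close> by blast
      next
        fix s'' assume "s'' \<le> s'" and r: "reached ((eta(y := 1))(y := 0)) (Xfrog X y i') y s''"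
        have "reached (eta(y := 0)) X y s''"
          by (rule reached_sim[OF r]) (use assms(2) in \<open>auto simp: frogs_at_def walk_def Xfrog_def\<close>)
        then show ?thesis using \<open>s' \<le> s\<close> \<open>s'' \<le> s'\<close> by (meson order.trans)
      qed
    qed
    then obtain s' where s': "s' \<le> s" "reached (eta(y:=0)) X y s'" by blast
    have "reached (eta(y:=1)) (Xfrog X y i) y s'"
      by (rule reached_sim[OF s'(2)]) (use assms(2) in \<open>auto simp: frogs_at_def walk_def Xfrog_def split: if_splits\<close>)
    from reached.step[OF this, of 0 j]
    have "reached (eta(y:=1)) (Xfrog X y i) (y + walk X y i j) (s' + j)"
      using assms(2) by (simp add: frogs_at_def walk_def Xfrog_def)
    then show ?thesis using iy s'(1) True add_le_mono1 by blast
  next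
    case False
    from step.IH show ?thesis
    proof (elim disjE exE conjE)
      assume "reached (eta(y := 0)) X z s"
      moreover have "i < frogs_at (eta(y := 0)) z" using step.hyps False by (auto simp add: frogs_at_def)
      ultimately show ?thesis using reached.step by blast
    next
      fix i' s' assume "i' < eta y" "s' \<le> s" "reached (eta(y := 1)) (Xfrog X y i') z s'"
      moreover have "i < frogs_at (eta(y := 1)) z" using step.hyps False by (auto simp add: frogs_at_def)
      moreover have "walk (Xfrog X y i') z i j = walk X z i j" using False by (simp add: walk_def Xfrog_def)
      ultimately show ?thesis using reached.step[of "eta(y:=1)" "Xfrog X y i'" z s' i j]
        by (metis add_le_mono1)
    qed
  qed
qed

lemma visited_decomp:
  assumes "y \<noteq> 0"
  shows "x \<in> visited eta X n \<longleftrightarrow>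
     x \<in> visited (eta(y:=0)) X n \<or> (\<exists>i<eta y. x \<in> visited (eta(y:=1)) (Xfrog X y i) n)"
proof
  assume "x \<in> visited eta X n"
  then obtain s where "s \<le> n" "reached eta X x s" by (auto simp: visited_def)
  from reached_decomp[OF this(2) assms] this(1) show "x \<in> visited (eta(y:=0)) X n \<or> (\<exists>i<eta y. x \<in> visited (eta(y:=1)) (Xfrog X y i) n)"
    unfolding visited_def by (auto intro: order.trans)
next
  assume "x \<in> visited (eta(y:=0)) X n \<or> (\<exists>i<eta y. x \<in> visited (eta(y:=1)) (Xfrog X y i) n)"
  then show "x \<in> visited eta X n"
  proof (elim disjE exE conjE)
    assume "x \<in> visited (eta(y:=0)) X n"
    then obtain s where "s \<le> n" and r0: "reached (eta(y:=0)) X x s" by (auto simp: visited_def)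
    moreover have "reached eta X x s"
      by (rule reached_mono_frogs[OF r0]) (simp add: frogs_at_def)
    ultimately show ?thesis unfolding visited_def by blast
  next
    fix i assume i: "i < eta y" "x \<in> visited (eta(y:=1)) (Xfrog X y i) n"
    then obtain s where "s \<le> n" and r1: "reached (eta(y:=1)) (Xfrog X y i) x s" by (auto simp: visited_def)
    moreover have "reached eta X x s"
      by (rule reached_sim[OF r1]) (use i assms in \<open>auto simp: frogs_at_def walk_def Xfrog_def split: if_splits\<close>)
    ultimately show ?thesis unfolding visited_def by blast
  qed
qed

definition fbox :: "nat \<Rightarrow> (int^'d) set" where
  "fbox n = {y. \<forall>l. \<bar>y $ l\<bar> \<le> int n}"

lemma unit_step_comp: "v \<in> unit_steps \<Longrightarrow> \<bar>v $ l\<bar> \<le> 1"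
  by (auto simp: unit_steps_def axis_def)

lemma walk_bound:
  assumes "\<And>k. k < j \<Longrightarrow> X (y,i,k) \<in> unit_steps"
  shows "\<bar>walk X y i j $ l\<bar> \<le> int j"
  using assms
proof (induction j)
  case 0 then show ?case by (simp add: walk_def)
next
  case (Suc j)
  have "walk X y i (Suc j) $ l = walk X y i j $ l + X (y,i,j) $ l" by (simp add: walk_def)
  moreover have "\<bar>walk X y i j $ l\<bar> \<le> int j" using Suc by auto
  moreover have "\<bar>X (y,i,j) $ l\<bar> \<le> 1" using Suc.prems unit_step_comp by auto
  ultimately show ?case by simp
qed

lemma reached_local:
  assumes "reached eta X x s" "s \<le> n"
    and fr: "\<forall>y\<in>fbox n. frogs_at eta' y = frogs_at eta y"
    and st: "\<forall>y\<in>fbox n. \<forall>i<frogs_at eta y. \<forall>k<n. X' (y,i,k) = X (y,i,k) \<and> X (y,i,k) \<in> unit_steps"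
  shows "reached eta' X' x s \<and> x \<in> fbox s"
  using assms(1,2)
proof induction
  case origin then show ?case by (simp add: reached.origin fbox_def)
next
  case (step y s i j)
  then have IH: "reached eta' X' y s" "y \<in> fbox s" by auto
  have yb: "y \<in> fbox n" using IH(2) step.prems unfolding fbox_def
    by (smt (verit, ccfv_SIG) le_add1 mem_Collect_eq of_nat_le_iff order_trans)
  have un: "\<And>k. k < j \<Longrightarrow> X (y,i,k) \<in> unit_steps" and eqs: "\<And>k. k < j \<Longrightarrow> X' (y,i,k) = X (y,i,k)"
    using st yb step.hyps(2) step.prems by auto
  have w: "walk X' y i j = walk X y i j" unfolding walk_def using eqs by (intro sum.cong) auto
  have "i < frogs_at eta' y" using fr yb step.hyps(2) by auto
  from reached.step[OF IH(1) this, of j] w have "reached eta' X' (y + walk X y i j) (s + j)" by simp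
  moreover have "y + walk X y i j \<in> fbox (s + j)"
  proof -
    { fix l
      have "\<bar>y $ l\<bar> \<le> int s" using IH(2) by (auto simp: fbox_def)
      moreover have "\<bar>walk X y i j $ l\<bar> \<le> int j" using walk_bound[of j X y i, OF un] by blast
      ultimately have "\<bar>(y + walk X y i j) $ l\<bar> \<le> int (s + j)" by simp }
    then show ?thesis by (auto simp: fbox_def)
  qed
  ultimately show ?case by blast
qed

lemma pgf_ext:
  fixes q :: real
  assumes "pgf_le \<pi> \<pi>'" "0 \<le> q" "q \<le> 1"
  shows "measure_pmf.expectation \<pi>' (\<lambda>k. q ^ k) \<le> measure_pmf.expectation \<pi> (\<lambda>k. q ^ k)"
proof -
  have main: "measure_pmf.expectation \<pi>' (\<lambda>k. t ^ k) \<le> measure_pmf.expectation \<pi> (\<lambda>k. t ^ k)"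
    if "0 < t" "t < 1" for t :: real
    using assms(1) that unfolding pgf_le_def by blast
  show ?thesis
  proof (cases "q = 0 \<or> q = 1")
    case False
    then show ?thesis using assms main by auto
  next
    case True
    then show ?thesis
    proof
      assume q1: "q = 1" then show ?thesis by simp
    next
      assume q0: "q = 0"
      define t where "t = (\<lambda>m::nat. 1 / real (Suc (Suc m)))"
      have t: "0 < t m" "t m < 1" for m unfolding t_def by (auto simp: field_simps)
      have tl: "t \<longlonglongrightarrow> 0" unfolding t_def
        using LIMSEQ_Suc[OF LIMSEQ_Suc[OF lim_1_over_n]] by simp
      have conv: "(\<lambda>m. measure_pmf.expectation \<rho> (\<lambda>k. t m ^ k)) \<longlonglongrightarrow> measure_pmf.expectation \<rho> (\<lambda>k. (0::real) ^ k)"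
        for \<rho> :: "nat pmf"
      proof (rule integral_dominated_convergence[where w = "\<lambda>_. 1"])
        show "AE x in measure_pmf \<rho>. (\<lambda>i. t i ^ x) \<longlonglongrightarrow> 0 ^ x"
          by (intro AE_I2 tendsto_power tl)
        show "AE x in measure_pmf \<rho>. norm (t i ^ x) \<le> 1" for i
          using t[of i] by (intro AE_I2) (simp add: power_le_one)
      qed auto
      have "measure_pmf.expectation \<pi>' (\<lambda>k. (0::real) ^ k) \<le> measure_pmf.expectation \<pi> (\<lambda>k. (0::real) ^ k)"
        by (rule LIMSEQ_le[OF conv conv]) (use main t in auto)
      then show ?thesis using q0 by simp
    qed
  qed
qed

lemma swap_site:
  assumes "finite B" "y \<in> B" "\<And>z. z \<noteq> y \<Longrightarrow> p' z = p z"
    and le: "\<And>f. emeasure (map_pmf (\<lambda>s. f(y:=s)) (p' y)) S \<le> emeasure (map_pmf (\<lambda>s. f(y:=s)) (p y)) S"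
  shows "emeasure (Pi_pmf B d p') S \<le> emeasure (Pi_pmf B d p) S"
proof -
  have B: "B = insert y (B - {y})" using assms(2) by blast
  have eq: "Pi_pmf B d r = bind_pmf (Pi_pmf (B - {y}) d r) (\<lambda>f. map_pmf (\<lambda>s. f(y:=s)) (r y))" for r
  proof -
    have "Pi_pmf B d r = Pi_pmf (insert y (B - {y})) d r" using B by simp
    also have "\<dots> = do {s \<leftarrow> r y; f \<leftarrow> Pi_pmf (B - {y}) d r; return_pmf (f(y := s))}"
      using assms(1) by (intro Pi_pmf_insert') auto
    also have "\<dots> = bind_pmf (Pi_pmf (B - {y}) d r) (\<lambda>f. map_pmf (\<lambda>s. f(y:=s)) (r y))"
      by (subst bind_commute_pmf) (simp add: map_pmf_def o_def)
    finally show ?thesis .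
  qed
  have rest: "Pi_pmf (B - {y}) d p' = Pi_pmf (B - {y}) d p"
    using assms(3) by (intro Pi_pmf_cong) auto
  show ?thesis unfolding eq[of p] eq[of p'] rest emeasure_bind_pmf
    by (intro nn_integral_mono le)
qed

lemma swap_all:
  assumes "finite B"
    and le: "\<And>y f. y \<in> B \<Longrightarrow> emeasure (map_pmf (\<lambda>s. f(y:=s)) (p' y)) S \<le> emeasure (map_pmf (\<lambda>s. f(y:=s)) (p y)) S"
  shows "emeasure (Pi_pmf B d p') S \<le> emeasure (Pi_pmf B d p) S"
proof -
  have "A \<subseteq> B \<Longrightarrow> emeasure (Pi_pmf B d (\<lambda>z. if z \<in> A then p' z else p z)) S \<le> emeasure (Pi_pmf B d p) S" for A
  proof (induction A rule: infinite_finite_induct)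
    case (infinite A)
    then show ?case using assms(1) rev_finite_subset by blast
  next
    case empty then show ?case by simp
  next
    case (insert y A)
    have "emeasure (Pi_pmf B d (\<lambda>z. if z \<in> insert y A then p' z else p z)) S
        \<le> emeasure (Pi_pmf B d (\<lambda>z. if z \<in> A then p' z else p z)) S"
      using insert.hyps insert.prems by (intro swap_site[OF assms(1)]) (use le[simplified] in auto)
    also have "\<dots> \<le> emeasure (Pi_pmf B d p) S" using insert by auto
    finally show ?case .
  qed
  moreover have "Pi_pmf B d (\<lambda>z. if z \<in> B then p' z else p z) = Pi_pmf B d p'"
    by (rule Pi_pmf_cong) auto
  ultimately show ?thesis by fastforce
qed

definition Ppath :: "nat \<Rightarrow> (nat \<Rightarrow> int^'d) pmf" where
  "Ppath n = Pi_pmf {..<n} 0 (\<lambda>_. pmf_of_set unit_steps)"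

definition site :: "nat \<Rightarrow> nat pmf \<Rightarrow> (nat \<times> (nat \<Rightarrow> nat \<Rightarrow> int^'d)) pmf" where
  "site n \<rho> = bind_pmf \<rho> (\<lambda>v. map_pmf (Pair v) (Pi_pmf {..<v} (\<lambda>_. 0) (\<lambda>_. Ppath n)))"

definition decode :: "(int^'d \<Rightarrow> nat \<times> (nat \<Rightarrow> nat \<Rightarrow> int^'d)) \<Rightarrow> (int^'d \<Rightarrow> nat) \<times> ((int^'d) \<times> nat \<times> nat \<Rightarrow> int^'d)" where
  "decode z = (\<lambda>y. fst (z y), \<lambda>(y,i,k). snd (z y) i k)"

definition vis :: "int^'d \<Rightarrow> nat \<Rightarrow> (int^'d \<Rightarrow> nat \<times> (nat \<Rightarrow> nat \<Rightarrow> int^'d)) \<Rightarrow> bool" where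
  "vis x n z \<longleftrightarrow> x \<in> visited (fst (decode z)) (snd (decode z)) n"

lemma visited_zero_site:
  assumes "y \<noteq> 0" "eta y = 0" "\<And>z l k. z \<noteq> y \<Longrightarrow> X' (z,l,k) = X (z,l,k)"
  shows "visited eta X n \<subseteq> visited eta X' n"
proof
  fix x assume "x \<in> visited eta X n"
  then obtain s where s: "s \<le> n" "reached eta X x s" by (auto simp: visited_def)
  have "reached eta X' x s"
  proof (rule reached_sim[OF s(2)])
    fix z i assume i: "i < frogs_at eta z"
    then have "z \<noteq> y" using assms by (auto simp: frogs_at_def)
    then show "\<exists>i'. i' < frogs_at eta z \<and> (\<forall>j. walk X' z i' j = walk X z i j)"
      using i assms(3) by (auto simp: walk_def intro!: exI[of _ i])
  qed
  then show "x \<in> visited eta X' n" using s(1) by (auto simp: visited_def)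
qed

lemma vis_decomp:
  assumes "y \<noteq> 0"
  shows "(\<not> vis x n (f(y:=(v,p)))) \<longleftrightarrow>
    (\<not> vis x n (f(y:=(0, \<lambda>_ _. 0)))) \<and> (\<forall>i<v. \<not> vis x n (f(y:=(1, \<lambda>_. p i))))"
proof -
  define eta where "eta = fst (decode (f(y:=(v,p))))"
  define X where "X = snd (decode (f(y:=(v,p))))"
  have ey: "eta y = v" by (simp add: eta_def decode_def)
  have e0: "eta(y:=0) = fst (decode (f(y:=(0, \<lambda>_ _. 0))))"
    by (auto simp: eta_def decode_def)
  have e1: "eta(y:=1) = fst (decode (f(y:=(1, \<lambda>_. p i))))" for i
    by (auto simp: eta_def decode_def)
  have x1: "Xfrog X y i = snd (decode (f(y:=(1, \<lambda>_. p i))))" for i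
    by (auto simp: X_def decode_def Xfrog_def)
  have v0: "visited (eta(y:=0)) X n = visited (eta(y:=0)) (snd (decode (f(y:=(0, \<lambda>_ _. 0))))) n"
    using assms by (intro equalityI visited_zero_site) (auto simp: X_def decode_def)
  have a1: "x \<in> visited (eta(y:=1)) (Xfrog X y i) n \<longleftrightarrow> vis x n (f(y:=(1, \<lambda>_. p i)))" for i
    unfolding vis_def e1[of i] x1 ..
  have a0: "x \<in> visited (eta(y:=0)) X n \<longleftrightarrow> vis x n (f(y:=(0, \<lambda>_ _. 0)))"
    unfolding vis_def v0 unfolding e0 ..
  have a: "x \<in> visited eta X n \<longleftrightarrow> vis x n (f(y:=(v,p)))"
    unfolding vis_def eta_def X_def ..
  show ?thesis
    using visited_decomp[OF assms, of x eta X n] unfolding a a0 a1 ey by blast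
qed

lemma site_bad:
  fixes f :: "int^'d \<Rightarrow> nat \<times> (nat \<Rightarrow> nat \<Rightarrow> int^'d)" and x :: "int^'d" and n :: nat
  assumes "y \<noteq> 0"
  defines "c \<equiv> (if vis x n (f(y:=(0, \<lambda>_ _. 0))) then 0 else 1::real)"
  defines "q \<equiv> measure_pmf.prob (Ppath n) {w. \<not> vis x n (f(y:=(1, \<lambda>_. w)))}"
  shows "emeasure (map_pmf (\<lambda>s. f(y:=s)) (site n \<rho>)) {z. \<not> vis x n z}
          = ennreal (c * measure_pmf.expectation \<rho> (\<lambda>k. q ^ k))"
proof -
  define Bad where "Bad = {w. \<not> vis x n (f(y:=(1, \<lambda>_. w)))}"
  have setq: "(Pair v -` ((\<lambda>s. f(y:=s)) -` {z. \<not> vis x n z})) =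
      (if c = 1 then Pi {..<v} (\<lambda>_. Bad) else {})" for v
    using vis_decomp[OF assms(1), of x n f v] by (auto simp: c_def Bad_def Pi_def)
  have m: "emeasure (measure_pmf (Pi_pmf {..<v} (\<lambda>_. 0) (\<lambda>_. Ppath n)))
       (Pair v -` ((\<lambda>s. f(y:=s)) -` {z. \<not> vis x n z})) = ennreal (c * q ^ v)" for v
  proof -
    have "measure_pmf.prob (Pi_pmf {..<v} (\<lambda>_. 0) (\<lambda>_. Ppath n)) (Pi {..<v} (\<lambda>_. Bad)) = q ^ v"
      by (subst measure_Pi_pmf_Pi) (auto simp: q_def Bad_def)
    then show ?thesis unfolding setq
      by (auto simp: measure_pmf.emeasure_eq_measure c_def)
  qed
  have int: "integrable (measure_pmf \<rho>) (\<lambda>k. q ^ k)"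
  proof (rule measure_pmf.integrable_const_bound[where B=1])
    have "0 \<le> q" "q \<le> 1" by (auto simp: q_def)
    then show "AE x in measure_pmf \<rho>. norm (q ^ x) \<le> 1" by (auto simp: power_le_one)
  qed auto
  have c01: "c = 0 \<or> c = 1" by (auto simp: c_def)
  have "emeasure (map_pmf (\<lambda>s. f(y:=s)) (site n \<rho>)) {z. \<not> vis x n z}
      = (\<integral>\<^sup>+v. ennreal (c * q ^ v) \<partial>measure_pmf \<rho>)"
    unfolding site_def by (simp add: m del: vimage_Collect_eq)
  also have "\<dots> = ennreal (c * measure_pmf.expectation \<rho> (\<lambda>k. q ^ k))"
    using c01
  proof
    assume "c = 0" then show ?thesis by simp
  next
    assume "c = 1"
    then show ?thesis using int
      by (simp, subst nn_integral_eq_integral) (auto simp: q_def)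
  qed
  finally show ?thesis .
qed

lemma site_le:
  assumes "y \<noteq> 0" "pgf_le \<pi> \<pi>'"
  shows "emeasure (map_pmf (\<lambda>s. f(y:=s)) (site n \<pi>')) {z. \<not> vis x n z}
      \<le> emeasure (map_pmf (\<lambda>s. f(y:=s)) (site n \<pi>)) {z. \<not> vis x n z}"
  unfolding site_bad[OF assms(1)]
  by (intro ennreal_leI mult_left_mono pgf_ext[OF assms(2)]) auto

lemma finite_fbox: "finite (fbox n :: (int^'d) set)"
proof -
  have "vec_nth ` (fbox n :: (int^'d) set) \<subseteq> PiE UNIV (\<lambda>_. {- int n..int n})"
    by (auto simp: fbox_def abs_le_iff) (smt (verit))
  then have "finite (vec_nth ` (fbox n :: (int^'d) set))"
    by (rule finite_subset) (intro finite_PiE, auto)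
  moreover have "inj_on vec_nth (fbox n :: (int^'d) set)" by (auto simp: inj_on_def vec_eq_iff)
  ultimately show ?thesis using finite_imageD by blast
qed

lemma zero_in_fbox: "0 \<in> fbox n" by (simp add: fbox_def)

definition Kmod :: "nat \<Rightarrow> nat pmf \<Rightarrow> (int^'d \<Rightarrow> nat \<times> (nat \<Rightarrow> nat \<Rightarrow> int^'d)) pmf" where
  "Kmod n \<rho> = Pi_pmf (fbox n) (0, \<lambda>_ _. 0) (\<lambda>y. site n (if y = 0 then return_pmf 1 else \<rho>))"

lemma K_le:
  assumes "pgf_le \<pi> \<pi>'"
  shows "emeasure (Kmod n \<pi>') {z. \<not> vis x n z} \<le> emeasure (Kmod n \<pi>) {z. \<not> vis x n z}"
  unfolding Kmod_def
proof (rule swap_all[OF finite_fbox])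
  fix y f
  show "emeasure (map_pmf (\<lambda>s. f(y:=s)) (site n (if y = 0 then return_pmf 1 else \<pi>'))) {z. \<not> vis x n z}
     \<le> emeasure (map_pmf (\<lambda>s. f(y:=s)) (site n (if y = 0 then return_pmf 1 else \<pi>))) {z. \<not> vis x n z}"
    using site_le[OF _ assms, of y f n x] by (cases "y = 0") auto
qed

definition u0 :: "int^'d" where "u0 = axis undefined 1"

lemma u0_unit: "u0 \<in> unit_steps" by (auto simp: u0_def unit_steps_def)

lemma finite_unit_steps: "finite (unit_steps :: (int^'d) set)"
proof -
  have "unit_steps \<subseteq> (\<lambda>(i::'d,b::bool). axis i (if b then 1 else -1 :: int)) ` UNIV"
    by (auto simp: unit_steps_def image_iff) (metis (full_types))+
  then show ?thesis by (rule finite_subset) auto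
qed

lemma unit_steps_ne: "unit_steps \<noteq> ({} :: (int^'d) set)" using u0_unit by blast

definition clampu :: "int^'d \<Rightarrow> int^'d" where
  "clampu w = (if w \<in> unit_steps then w else u0)"

lemma clampu_unit: "clampu w \<in> unit_steps" by (simp add: clampu_def u0_unit)

definition enc :: "nat \<Rightarrow> (int^'d \<Rightarrow> nat) \<times> ((int^'d) \<times> nat \<times> nat \<Rightarrow> int^'d) \<Rightarrow> (int^'d \<Rightarrow> nat \<times> (nat \<Rightarrow> nat \<Rightarrow> int^'d))" where
  "enc n \<omega> = (\<lambda>y. if y \<in> fbox n then (frogs_at (fst \<omega>) y,
       \<lambda>i k. if i < frogs_at (fst \<omega>) y \<and> k < n then clampu (snd \<omega> (y,i,k)) else 0) else (0, \<lambda>_ _. 0))"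

lemma enc_vis: "x \<in> visited (fst \<omega>) (\<lambda>j. clampu (snd \<omega> j)) n \<longleftrightarrow> vis x n (enc n \<omega>)"
proof -
  have fr: "frogs_at (fst (decode (enc n \<omega>))) y = frogs_at (fst \<omega>) y" if "y \<in> fbox n" for y
    using that by (auto simp: decode_def enc_def frogs_at_def)
  have st: "snd (decode (enc n \<omega>)) (y,i,k) = clampu (snd \<omega> (y,i,k))"
    if "y \<in> fbox n" "i < frogs_at (fst \<omega>) y" "k < n" for y i k
    using that by (auto simp: decode_def enc_def)
  show ?thesis unfolding vis_def visited_def mem_Collect_eq
  proof (intro iffI; elim exE conjE)
    fix s assume "s \<le> n" "reached (fst \<omega>) (\<lambda>j. clampu (snd \<omega> j)) x s"
    have "reached (fst (decode (enc n \<omega>))) (snd (decode (enc n \<omega>))) x s \<and> x \<in> fbox s"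
      by (rule reached_local[OF \<open>reached (fst \<omega>) (\<lambda>j. clampu (snd \<omega> j)) x s\<close> \<open>s \<le> n\<close>]) (use fr st clampu_unit in auto)
    then show "\<exists>s\<le>n. reached (fst (decode (enc n \<omega>))) (snd (decode (enc n \<omega>))) x s"
      using \<open>s \<le> n\<close> by blast
  next
    fix s assume "s \<le> n" "reached (fst (decode (enc n \<omega>))) (snd (decode (enc n \<omega>))) x s"
    have "reached (fst \<omega>) (\<lambda>j. clampu (snd \<omega> j)) x s \<and> x \<in> fbox s"
      by (rule reached_local[OF \<open>reached (fst (decode (enc n \<omega>))) (snd (decode (enc n \<omega>))) x s\<close> \<open>s \<le> n\<close>]) (use fr st clampu_unit in auto)
    then show "\<exists>s\<le>n. reached (fst \<omega>) (\<lambda>j. clampu (snd \<omega> j)) x s"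
      using \<open>s \<le> n\<close> by blast
  qed
qed

lemma enc_eq_iff:
  fixes \<omega> \<omega>0 :: "(int^'d \<Rightarrow> nat) \<times> ((int^'d) \<times> nat \<times> nat \<Rightarrow> int^'d)"
  shows
  "enc n \<omega> = enc n \<omega>0 \<longleftrightarrow>
    (\<forall>y\<in>fbox n - {0}. fst \<omega> y = fst \<omega>0 y) \<and>
    (\<forall>y\<in>fbox n. \<forall>i<frogs_at (fst \<omega>0) y. \<forall>k<n. clampu (snd \<omega> (y,i,k)) = clampu (snd \<omega>0 (y,i,k)))"
proof
  assume eq: "enc n \<omega> = enc n \<omega>0"
  have a: "frogs_at (fst \<omega>) y = frogs_at (fst \<omega>0) y" if "y \<in> fbox n" for y
    using fun_cong[OF eq, of y] that by (auto simp: enc_def)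
  have b: "clampu (snd \<omega> (y,i,k)) = clampu (snd \<omega>0 (y,i,k))"
    if "y \<in> fbox n" "i < frogs_at (fst \<omega>0) y" "k < n" for y i k
    using fun_cong[OF fun_cong[OF arg_cong[where f=snd, OF fun_cong[OF eq, of y]], of i], of k] that a[OF that(1)]
    by (auto simp: enc_def)
  show "(\<forall>y\<in>fbox n - {0}. fst \<omega> y = fst \<omega>0 y) \<and>
    (\<forall>y\<in>fbox n. \<forall>i<frogs_at (fst \<omega>0) y. \<forall>k<n. clampu (snd \<omega> (y,i,k)) = clampu (snd \<omega>0 (y,i,k)))"
  proof (intro conjI ballI allI impI)
    fix y :: "int^'d" assume "y \<in> fbox n - {0}"
    then show "fst \<omega> y = fst \<omega>0 y" using a[of y] by (auto simp: frogs_at_def)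
  qed (use b in auto)
next
  assume h: "(\<forall>y\<in>fbox n - {0}. fst \<omega> y = fst \<omega>0 y) \<and>
    (\<forall>y\<in>fbox n. \<forall>i<frogs_at (fst \<omega>0) y. \<forall>k<n. clampu (snd \<omega> (y,i,k)) = clampu (snd \<omega>0 (y,i,k)))"
  have a: "frogs_at (fst \<omega>) y = frogs_at (fst \<omega>0) y" if "y \<in> fbox n" for y
    using h that by (auto simp: frogs_at_def)
  show "enc n \<omega> = enc n \<omega>0"
    unfolding enc_def using a h by (auto simp: fun_eq_iff)
qed

lemma pmf_site: "pmf (site n \<rho>) (v, P) = pmf \<rho> v * pmf (Pi_pmf {..<v} (\<lambda>_. 0) (\<lambda>_. Ppath n)) P"
proof -
  have "pmf (map_pmf (Pair v') (Pi_pmf {..<v'} (\<lambda>_. 0) (\<lambda>_. Ppath n))) (v, P)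
     = (if v' = v then pmf (Pi_pmf {..<v} (\<lambda>_. 0) (\<lambda>_. Ppath n)) P else 0)" for v'
  proof (cases "v' = v")
    case True
    then show ?thesis by (simp add: pmf_map_inj' inj_on_def)
  next
    case False
    then have "Pair v' -` {(v, P)} = {}" by auto
    with False show ?thesis by (simp add: pmf_map)
  qed
  then have "pmf (site n \<rho>) (v, P) = (\<integral>v'. (if v' = v then pmf (Pi_pmf {..<v} (\<lambda>_. 0) (\<lambda>_. Ppath n)) P else 0) \<partial>measure_pmf \<rho>)"
    unfolding site_def pmf_bind by simp
  also have "\<dots> = (\<integral>v'. indicator {v} v' * pmf (Pi_pmf {..<v} (\<lambda>_. 0) (\<lambda>_. Ppath n)) P \<partial>measure_pmf \<rho>)"
    by (intro Bochner_Integration.integral_cong) auto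
  also have "\<dots> = pmf \<rho> v * pmf (Pi_pmf {..<v} (\<lambda>_. 0) (\<lambda>_. Ppath n)) P"
    by (simp add: measure_pmf_single)
  finally show ?thesis .
qed

definition Jset :: "nat \<Rightarrow> (int^'d \<Rightarrow> nat) \<Rightarrow> ((int^'d) \<times> nat \<times> nat) set" where
  "Jset n eta = (SIGMA y:fbox n. {..<frogs_at eta y} \<times> {..<n})"

lemma finite_Jset: "finite (Jset n eta)"
  unfolding Jset_def by (intro finite_SigmaI finite_fbox) auto

lemma pmf_K_enc:
  fixes \<omega>0 :: "(int^'d \<Rightarrow> nat) \<times> ((int^'d) \<times> nat \<times> nat \<Rightarrow> int^'d)"
  shows
  "pmf (Kmod n \<rho>) (enc n \<omega>0) =
     (\<Prod>y\<in>fbox n - {0}. pmf \<rho> (fst \<omega>0 y)) * (\<Prod>j\<in>Jset n (fst \<omega>0). pmf (pmf_of_set unit_steps) (clampu (snd \<omega>0 j)))"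
proof -
  define G where "G y = (\<Prod>i<frogs_at (fst \<omega>0) y. \<Prod>k<n. pmf (pmf_of_set unit_steps) (clampu (snd \<omega>0 (y,i,k))))" for y
  have s: "pmf (site n (if y = 0 then return_pmf 1 else \<rho>)) (enc n \<omega>0 y)
      = (if y = 0 then 1 else pmf \<rho> (fst \<omega>0 y)) * G y" if y: "y \<in> fbox n" for y
  proof -
    define v where "v = frogs_at (fst \<omega>0) y"
    define P where "P = (\<lambda>i k. if i < v \<and> k < n then clampu (snd \<omega>0 (y,i,k)) else (0::int^'d))"
    have e: "enc n \<omega>0 y = (v, P)" using y by (simp add: enc_def v_def P_def)
    have pP: "pmf (Pi_pmf {..<v} (\<lambda>_. 0) (\<lambda>_. Ppath n)) P = (\<Prod>i<v. pmf (Ppath n) (P i))"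
      by (rule pmf_Pi') (auto simp: P_def fun_eq_iff)
    have pPi: "pmf (Ppath n) (P i) = (\<Prod>k<n. pmf (pmf_of_set unit_steps) (clampu (snd \<omega>0 (y,i,k))))" if "i < v" for i
      unfolding Ppath_def using that by (subst pmf_Pi') (auto simp: P_def)
    have "pmf (site n (if y = 0 then return_pmf 1 else \<rho>)) (enc n \<omega>0 y)
       = pmf (if y = 0 then return_pmf 1 else \<rho>) v * G y"
    proof -
      have "(\<Prod>i<v. pmf (Ppath n) (P i)) = G y"
        unfolding G_def v_def[symmetric] using pPi by (intro prod.cong) auto
      then show ?thesis unfolding e pmf_site pP by simp
    qed
    also have "pmf (if y = 0 then return_pmf 1 else \<rho>) v = (if y = 0 then 1 else pmf \<rho> (fst \<omega>0 y))"
      by (auto simp: v_def frogs_at_def)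
    finally show ?thesis .
  qed
  have "pmf (Kmod n \<rho>) (enc n \<omega>0) = (\<Prod>y\<in>fbox n. pmf (site n (if y = 0 then return_pmf 1 else \<rho>)) (enc n \<omega>0 y))"
    unfolding Kmod_def by (rule pmf_Pi'[OF finite_fbox]) (auto simp: enc_def)
  also have "\<dots> = (\<Prod>y\<in>fbox n. (if y = 0 then 1 else pmf \<rho> (fst \<omega>0 y)) * G y)"
    using s by (rule prod.cong[OF refl])
  also have "\<dots> = (\<Prod>y\<in>fbox n. (if y = 0 then 1 else pmf \<rho> (fst \<omega>0 y))) * (\<Prod>y\<in>fbox n. G y)"
    by (rule prod.distrib)
  also have "(\<Prod>y\<in>fbox n. (if y = 0 then 1 else pmf \<rho> (fst \<omega>0 y))) = (\<Prod>y\<in>fbox n - {0}. pmf \<rho> (fst \<omega>0 y))"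
    by (subst prod.remove[OF finite_fbox zero_in_fbox]) (auto intro!: prod.cong)
  also have "(\<Prod>y\<in>fbox n. G y) = (\<Prod>j\<in>Jset n (fst \<omega>0). pmf (pmf_of_set unit_steps) (clampu (snd \<omega>0 j)))"
  proof -
    have "G y = (\<Prod>(i,k)\<in>{..<frogs_at (fst \<omega>0) y} \<times> {..<n}. pmf (pmf_of_set unit_steps) (clampu (snd \<omega>0 (y,i,k))))" for y
      unfolding G_def by (rule prod.cartesian_product)
    then have "(\<Prod>y\<in>fbox n. G y) = (\<Prod>y\<in>fbox n. \<Prod>ik\<in>{..<frogs_at (fst \<omega>0) y} \<times> {..<n}. pmf (pmf_of_set unit_steps) (clampu (snd \<omega>0 (y,ik))))"
      by (simp add: case_prod_beta')
    also have "\<dots> = (\<Prod>j\<in>Jset n (fst \<omega>0). pmf (pmf_of_set unit_steps) (clampu (snd \<omega>0 j)))"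
      unfolding Jset_def by (subst prod.Sigma) (auto intro: finite_fbox simp: case_prod_beta')
    finally show ?thesis .
  qed
  finally show ?thesis .
qed

lemma space_frog: "space (frog_space \<rho>) = UNIV"
  by (simp add: frog_space_def space_pair_measure space_PiM)

lemma prob_frog: "prob_space (frog_space \<rho>)"
  unfolding frog_space_def
  by (intro prob_space_pair prob_space_PiM prob_space_measure_pmf)

lemma U_clamp: "emeasure (measure_pmf (pmf_of_set unit_steps)) {w. clampu w = clampu a} = ennreal (pmf (pmf_of_set unit_steps) (clampu a))"
proof -
  have su: "set_pmf (pmf_of_set unit_steps) = (unit_steps :: (int^'d) set)"
    by (rule set_pmf_of_set[OF unit_steps_ne finite_unit_steps])
  have "{w. clampu w = clampu a} \<inter> set_pmf (pmf_of_set unit_steps) = {clampu a}"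
    unfolding su using clampu_unit[of a] by (auto simp: clampu_def)
  then have "emeasure (measure_pmf (pmf_of_set unit_steps)) {w. clampu w = clampu a}
      = emeasure (measure_pmf (pmf_of_set unit_steps)) {clampu a}"
    by (metis emeasure_Int_set_pmf)
  then show ?thesis by (simp add: emeasure_pmf_single)
qed

lemma cyl:
  fixes \<omega>0 :: "(int^'d \<Rightarrow> nat) \<times> ((int^'d) \<times> nat \<times> nat \<Rightarrow> int^'d)"
  shows "{\<omega>. enc n \<omega> = enc n \<omega>0} \<in> sets (frog_space \<rho>)"
    and "emeasure (frog_space \<rho>) {\<omega>. enc n \<omega> = enc n \<omega>0} = pmf (Kmod n \<rho>) (enc n \<omega>0)"
proof -
  let ?U = "measure_pmf (pmf_of_set unit_steps) :: (int^'d) measure"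
  define J where "J = Jset n (fst \<omega>0)"
  define E where "E = prod_emb UNIV (\<lambda>_. measure_pmf \<rho>) (fbox n - {0}) (PiE (fbox n - {0}) (\<lambda>y. {fst \<omega>0 y}))"
  define F where "F = prod_emb UNIV (\<lambda>_. ?U) J (PiE J (\<lambda>j. {w. clampu w = clampu (snd \<omega>0 j)}))"
  have seteq: "{\<omega>. enc n \<omega> = enc n \<omega>0} = E \<times> F"
    unfolding enc_eq_iff E_def F_def J_def
    by (auto simp: prod_emb_iff PiE_iff extensional_def Jset_def)
  have E: "E \<in> sets (PiM UNIV (\<lambda>_. measure_pmf \<rho>))"
    unfolding E_def by (intro sets_PiM_I) (auto intro: finite_fbox)
  have F: "F \<in> sets (PiM UNIV (\<lambda>_. ?U))"
    unfolding F_def J_def by (intro sets_PiM_I finite_Jset) auto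
  show "{\<omega>. enc n \<omega> = enc n \<omega>0} \<in> sets (frog_space \<rho>)"
    unfolding seteq frog_space_def using E F by (rule pair_measureI)
  interpret sf: sigma_finite_measure "PiM UNIV (\<lambda>_. ?U)"
    by (intro prob_space_imp_sigma_finite prob_space_PiM prob_space_measure_pmf)
  have eE: "emeasure (PiM UNIV (\<lambda>_. measure_pmf \<rho>)) E = ennreal (\<Prod>y\<in>fbox n - {0}. pmf \<rho> (fst \<omega>0 y))"
    unfolding E_def
    by (subst emeasure_PiM_emb) (auto intro: finite_fbox prob_space_measure_pmf simp: emeasure_pmf_single prod_ennreal)
  have eF: "emeasure (PiM UNIV (\<lambda>_. ?U)) F = ennreal (\<Prod>j\<in>J. pmf (pmf_of_set unit_steps) (clampu (snd \<omega>0 j)))"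
    unfolding F_def J_def
    by (subst emeasure_PiM_emb) (auto intro: finite_Jset prob_space_measure_pmf simp: U_clamp prod_ennreal)
  show "emeasure (frog_space \<rho>) {\<omega>. enc n \<omega> = enc n \<omega>0} = pmf (Kmod n \<rho>) (enc n \<omega>0)"
    unfolding seteq frog_space_def sf.emeasure_pair_measure_Times[OF E F] eE eF pmf_K_enc J_def
    by (simp add: ennreal_mult'' prod_nonneg)
qed

lemma range_enc_countable: "countable (range (enc n :: _ \<Rightarrow> (int^'d \<Rightarrow> nat \<times> (nat \<Rightarrow> nat \<Rightarrow> int^'d))))"
proof -
  define h where "h (v::nat) (g::nat \<Rightarrow> nat \<Rightarrow> int^'d) = (\<lambda>i k. if i < v \<and> k < n then g i k else (0::int^'d))" for v g
  define S where "S = (\<Union>v. Pair v ` (h v ` PiE {..<v} (\<lambda>_. PiE {..<n} (\<lambda>_. UNIV :: (int^'d) set))))"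
  define ext where "ext (g :: int^'d \<Rightarrow> nat \<times> (nat \<Rightarrow> nat \<Rightarrow> int^'d)) = (\<lambda>y::int^'d. if y \<in> fbox n then g y else (0::nat, \<lambda>_ _. 0::int^'d))" for g
  have cS: "countable S" unfolding S_def
    by (intro countable_UN countable_image countable_PiE) (auto intro: countableI_type)
  have "range (enc n :: _ \<Rightarrow> (int^'d \<Rightarrow> nat \<times> (nat \<Rightarrow> nat \<Rightarrow> int^'d))) \<subseteq> ext ` PiE (fbox n) (\<lambda>_. S)"
  proof
    fix z assume "z \<in> range (enc n :: _ \<Rightarrow> (int^'d \<Rightarrow> nat \<times> (nat \<Rightarrow> nat \<Rightarrow> int^'d)))"
    then obtain \<omega> where z: "z = enc n \<omega>" by blast
    have "z = ext (restrict z (fbox n))" unfolding ext_def z by (auto simp: enc_def fun_eq_iff)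
    moreover have "restrict z (fbox n) \<in> PiE (fbox n) (\<lambda>_. S)"
    proof (rule restrict_PiE_iff[THEN iffD2], intro ballI)
      fix y :: "int^'d" assume y: "y \<in> fbox n"
      define v where "v = frogs_at (fst \<omega>) y"
      define g where "g = restrict (\<lambda>i. restrict (\<lambda>k. clampu (snd \<omega> (y,i,k))) {..<n}) {..<v}"
      have "z y = Pair v (h v g)" using y unfolding z enc_def h_def g_def v_def by (auto simp: fun_eq_iff)
      moreover have "g \<in> PiE {..<v} (\<lambda>_. PiE {..<n} (\<lambda>_. UNIV))" unfolding g_def by auto
      ultimately show "z y \<in> S" unfolding S_def by blast
    qed
    ultimately show "z \<in> ext ` PiE (fbox n) (\<lambda>_. S)" by blast
  qed
  moreover have "countable (ext ` PiE (fbox n) (\<lambda>_. S))"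
    by (intro countable_image countable_PiE finite_fbox cS)
  ultimately show ?thesis by (rule countable_subset)
qed

lemma supp_K: "set_pmf (Kmod n \<rho>) \<subseteq> range (enc n :: _ \<Rightarrow> (int^'d \<Rightarrow> nat \<times> (nat \<Rightarrow> nat \<Rightarrow> int^'d)))"
proof
  fix z :: "int^'d \<Rightarrow> nat \<times> (nat \<Rightarrow> nat \<Rightarrow> int^'d)"
  assume zK: "z \<in> set_pmf (Kmod n \<rho>)"
  have su: "set_pmf (pmf_of_set unit_steps) = (unit_steps :: (int^'d) set)"
    by (rule set_pmf_of_set[OF unit_steps_ne finite_unit_steps])
  have out: "z y = (0, \<lambda>_ _. 0)" if "y \<notin> fbox n" for y
    using zK that set_Pi_pmf_subset[OF finite_fbox, where dflt="(0, \<lambda>_ _. 0)"] unfolding Kmod_def by force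
  have inn: "\<exists>v P. z y = (v, P) \<and> v \<in> set_pmf (if y = 0 then return_pmf 1 else \<rho>) \<and>
      (\<forall>i. i \<ge> v \<longrightarrow> P i = (\<lambda>_. 0)) \<and> (\<forall>i<v. \<forall>k. (k < n \<longrightarrow> P i k \<in> unit_steps) \<and> (k \<ge> n \<longrightarrow> P i k = 0))"
    if y: "y \<in> fbox n" for y
  proof -
    have "z y \<in> set_pmf (site n (if y = 0 then return_pmf 1 else \<rho>))"
      using zK y unfolding Kmod_def set_Pi_pmf[OF finite_fbox] PiE_dflt_def by auto
    then obtain v P where vP: "z y = (v, P)" "v \<in> set_pmf (if y = 0 then return_pmf 1 else \<rho>)"
      "P \<in> set_pmf (Pi_pmf {..<v} (\<lambda>_. 0) (\<lambda>_. Ppath n))"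
      unfolding site_def by auto
    have P1: "\<forall>i. i \<ge> v \<longrightarrow> P i = (\<lambda>_. 0)" and P2: "\<forall>i<v. P i \<in> set_pmf (Ppath n)"
      using vP(3) unfolding set_Pi_pmf[OF finite_lessThan] PiE_dflt_def by simp_all
    have P3: "\<forall>i<v. \<forall>k. (k < n \<longrightarrow> P i k \<in> unit_steps) \<and> (k \<ge> n \<longrightarrow> P i k = 0)"
    proof (intro allI impI)
      fix i k assume "i < v"
      then have "P i \<in> set_pmf (Ppath n)" using P2 by blast
      then have "\<forall>x. (x < n \<longrightarrow> P i x \<in> unit_steps) \<and> (\<not> x < n \<longrightarrow> P i x = 0)"
        unfolding Ppath_def set_Pi_pmf[OF finite_lessThan] PiE_dflt_def by (simp add: su)
      then show "(k < n \<longrightarrow> P i k \<in> unit_steps) \<and> (k \<ge> n \<longrightarrow> P i k = 0)" by (simp add: not_less[symmetric])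
    qed
    show ?thesis by (rule exI[of _ v], rule exI[of _ P]) (intro conjI vP(1) vP(2) P1 P3)
  qed
  define \<omega> where "\<omega> = ((\<lambda>y. fst (z y)), (\<lambda>(y,i,k). snd (z y) i k))"
  have "enc n \<omega> = z"
  proof
    fix y
    show "enc n \<omega> y = z y"
    proof (cases "y \<in> fbox n")
      case False then show ?thesis using out[OF False] by (simp add: enc_def)
    next
      case True
      from inn[OF True] obtain v P where vP: "z y = (v, P)" "v \<in> set_pmf (if y = 0 then return_pmf 1 else \<rho>)"
        "\<forall>i. i \<ge> v \<longrightarrow> P i = (\<lambda>_. 0)" "\<forall>i<v. \<forall>k. (k < n \<longrightarrow> P i k \<in> unit_steps) \<and> (k \<ge> n \<longrightarrow> P i k = 0)"
        by blast
      have fv: "frogs_at (fst \<omega>) y = v" using vP(1,2) by (auto simp: frogs_at_def \<omega>_def split: if_splits)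
      have "(\<lambda>i k. if i < v \<and> k < n then clampu (P i k) else 0) = P"
      proof (intro ext)
        fix i k show "(if i < v \<and> k < n then clampu (P i k) else 0) = P i k"
          using vP(3,4) by (cases "i < v"; cases "k < n") (auto simp: clampu_def not_less)
      qed
      moreover have sn: "snd \<omega> (y,i,k) = P i k" for i k using vP(1) by (simp add: \<omega>_def)
      moreover have "enc n \<omega> y = (v, \<lambda>i k. if i < v \<and> k < n then clampu (snd \<omega> (y,i,k)) else 0)"
        using True fv by (simp add: enc_def)
      ultimately show ?thesis using vP(1) by (simp only: sn)
    qed
  qed
  then show "z \<in> range (enc n)" by (metis rangeI)
qed

lemma bridge:
  fixes T :: "(int^'d \<Rightarrow> nat \<times> (nat \<Rightarrow> nat \<Rightarrow> int^'d)) set"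
  shows "enc n -` T \<in> sets (frog_space \<rho>)"
    and "emeasure (frog_space \<rho>) (enc n -` T) = emeasure (Kmod n \<rho>) T"
proof -
  define R where "R = T \<inter> range (enc n)"
  have cR: "countable R" unfolding R_def using range_enc_countable by (rule countable_subset[rotated]) auto
  have un: "enc n -` T = (\<Union>z\<in>R. {\<omega>. enc n \<omega> = z})" unfolding R_def by auto
  have ms: "{\<omega>. enc n \<omega> = z} \<in> sets (frog_space \<rho>)" if "z \<in> R" for z
    using that cyl(1) unfolding R_def by auto
  have em: "emeasure (frog_space \<rho>) {\<omega>. enc n \<omega> = z} = emeasure (Kmod n \<rho>) {z}" if "z \<in> R" for z
    using that cyl(2) unfolding R_def by (auto simp: emeasure_pmf_single)
  show "enc n -` T \<in> sets (frog_space \<rho>)"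
    unfolding un using ms cR by (intro sets.countable_Union) auto
  have "emeasure (frog_space \<rho>) (enc n -` T) = (\<integral>\<^sup>+z. emeasure (frog_space \<rho>) {\<omega>. enc n \<omega> = z} \<partial>count_space R)"
    unfolding un by (rule emeasure_UN_countable[OF ms cR]) (auto simp: disjoint_family_on_def)
  also have "\<dots> = (\<integral>\<^sup>+z. emeasure (Kmod n \<rho>) {z} \<partial>count_space R)"
    by (rule nn_integral_cong) (simp add: em)
  also have "\<dots> = emeasure (Kmod n \<rho>) R"
    by (rule emeasure_countable_singleton[symmetric]) (auto simp: cR)
  also have "\<dots> = emeasure (Kmod n \<rho>) T"
  proof -
    have "R \<inter> set_pmf (Kmod n \<rho>) = T \<inter> set_pmf (Kmod n \<rho>)" unfolding R_def using supp_K by blast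
    then show ?thesis by (metis emeasure_Int_set_pmf)
  qed
  finally show "emeasure (frog_space \<rho>) (enc n -` T) = emeasure (Kmod n \<rho>) T" .
qed

lemma cube_round: "p \<in> cube (\<chi> i. \<lceil>p $ i - 1/2\<rceil>)"
  unfolding cube_def
proof (safe)
  fix i
  have "\<lceil>p $ i - 1/2\<rceil> < p $ i - 1/2 + 1" using ceiling_correct[of "p $ i - 1/2"] by linarith
  then show "real_of_int ((\<chi> i. \<lceil>p $ i - 1/2\<rceil>) $ i) - 1/2 < p $ i" by simp
  have "p $ i - 1/2 \<le> \<lceil>p $ i - 1/2\<rceil>" by (rule le_of_int_ceiling)
  then show "p $ i \<le> real_of_int ((\<chi> i. \<lceil>p $ i - 1/2\<rceil>) $ i) + 1/2" by simp linarith
qed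

lemma cube_unique: "p \<in> cube x \<Longrightarrow> p \<in> cube y \<Longrightarrow> x = y"
proof -
  assume px: "p \<in> cube x" and py: "p \<in> cube y"
  show "x = y"
  proof (rule vec_eq_iff[THEN iffD2], rule allI)
    fix i
    have "real_of_int (x $ i) - 1/2 < p $ i" "p $ i \<le> real_of_int (x $ i) + 1/2"
         "real_of_int (y $ i) - 1/2 < p $ i" "p $ i \<le> real_of_int (y $ i) + 1/2"
      using px py by (auto simp: cube_def)
    then have "real_of_int (x $ i) < real_of_int (y $ i) + 1" "real_of_int (y $ i) < real_of_int (x $ i) + 1" by linarith+
    then have "x $ i < y $ i + 1" "y $ i < x $ i + 1" by linarith+
    then show "x $ i = y $ i" by linarith
  qed
qed

lemma eps_aux1:
  fixes a b :: "real^'d"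
  assumes eq: "(1 - e) *\<^sub>R a = (1 + e) *\<^sub>R b"
  shows "(1 + e) *\<^sub>R (a - b) = (2*e) *\<^sub>R a"
proof -
  have "(1 + e) *\<^sub>R (a - b) = (1 + e) *\<^sub>R a - (1 + e) *\<^sub>R b" by (simp add: scaleR_right_diff_distrib)
  also have "\<dots> = (1 + e) *\<^sub>R a - (1 - e) *\<^sub>R a" using eq by simp
  also have "\<dots> = ((1 + e) - (1 - e)) *\<^sub>R a" by (rule scaleR_left_diff_distrib[symmetric])
  also have "((1 + e) - (1 - e)) = 2 * e" by simp
  finally show ?thesis .
qed
lemma eps_aux2:
  fixes a b :: "real^'d"
  assumes h: "(1 + e) *\<^sub>R (a - b) = (2*e) *\<^sub>R a" and e: "0 < e" and e2: "2 * e * (norm a + 1) \<le> r"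
  shows "dist a b < r"
proof -
  have "(1 + e) * norm (a - b) = 2 * e * norm a" using arg_cong[OF h, of norm] e by simp
  moreover have "norm (a - b) \<le> (1 + e) * norm (a - b)" using e by (intro mult_le_cancel_right1[THEN iffD2]) auto
  ultimately have "dist a b \<le> 2 * e * norm a" by (simp add: dist_norm)
  also have "\<dots> < 2 * e * (norm a + 1)" using e by simp
  finally show ?thesis using e2 by simp
qed

lemma choose_eps:
  fixes a :: "real^'d"
  assumes "closed A'" "a \<notin> A'"
  shows "\<exists>\<epsilon>. 0 < \<epsilon> \<and> \<epsilon> < 1 \<and> (\<forall>b\<in>A'. (1 - \<epsilon>) *\<^sub>R a \<noteq> (1 + \<epsilon>) *\<^sub>R b)"
proof -
  have "open (- A')" using assms(1) by auto
  then obtain r where r: "r > 0" "ball a r \<subseteq> - A'" using assms(2) open_contains_ball by blast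
  define \<epsilon> where "\<epsilon> = min (1/2) (r / (2 * (norm a + 1)))"
  have "0 < r / (2 * (norm a + 1))" using r by (intro divide_pos_pos) (auto intro: add_nonneg_pos)
  then have e: "0 < \<epsilon>" "\<epsilon> < 1" by (auto simp: \<epsilon>_def)
  have e2: "2 * \<epsilon> * (norm a + 1) \<le> r"
  proof -
    have "\<epsilon> \<le> r / (2 * (norm a + 1))" by (simp add: \<epsilon>_def)
    then show ?thesis by (simp add: field_simps add_pos_nonneg)
  qed
  have "(1 - \<epsilon>) *\<^sub>R a \<noteq> (1 + \<epsilon>) *\<^sub>R b" if b: "b \<in> A'" for b
  proof
    assume eq: "(1 - \<epsilon>) *\<^sub>R a = (1 + \<epsilon>) *\<^sub>R b"
    have "dist a b < r" by (rule eps_aux2[OF eps_aux1[OF eq] e(1) e2])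
    then have "b \<in> ball a r" by (simp add: dist_commute)
    then show False using r(2) b by blast
  qed
  then show ?thesis using e by blast
qed

lemma AE_unit: "AE \<omega> in frog_space \<rho>. \<forall>j. snd \<omega> j \<in> unit_steps"
proof (subst AE_all_countable, intro allI)
  fix j :: "(int^'d) \<times> nat \<times> nat"
  let ?U = "measure_pmf (pmf_of_set unit_steps) :: (int^'d) measure"
  let ?M1 = "PiM UNIV (\<lambda>_. measure_pmf \<rho>) :: ((int^'d) \<Rightarrow> nat) measure"
  let ?M2 = "PiM UNIV (\<lambda>_. ?U)"
  define F where "F = prod_emb UNIV (\<lambda>_. ?U) {j} (PiE {j} (\<lambda>_. - unit_steps))"
  have F: "F \<in> sets ?M2" unfolding F_def by (intro sets_PiM_I) auto
  interpret sf: sigma_finite_measure ?M2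
    by (intro prob_space_imp_sigma_finite prob_space_PiM prob_space_measure_pmf)
  have su: "set_pmf (pmf_of_set unit_steps) = (unit_steps :: (int^'d) set)"
    by (rule set_pmf_of_set[OF unit_steps_ne finite_unit_steps])
  have U0: "emeasure ?U (- unit_steps) = 0"
  proof -
    have "emeasure ?U (- unit_steps) = emeasure ?U ((- unit_steps) \<inter> set_pmf (pmf_of_set unit_steps))"
      by (rule emeasure_Int_set_pmf[symmetric])
    also have "(- unit_steps) \<inter> set_pmf (pmf_of_set unit_steps) = ({} :: (int^'d) set)" using su by auto
    finally show ?thesis by simp
  qed
  have eF: "emeasure ?M2 F = 0"
    unfolding F_def by (subst emeasure_PiM_emb) (auto intro: prob_space_measure_pmf simp: U0)
  show "AE \<omega> in frog_space \<rho>. snd \<omega> j \<in> unit_steps"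
  proof (rule AE_I')
    show "space ?M1 \<times> F \<in> null_sets (frog_space \<rho>)"
      unfolding frog_space_def null_sets_def
      using sf.emeasure_pair_measure_Times[OF sets.top F] eF F by (auto intro: pair_measureI)
    show "{\<omega> \<in> space (frog_space \<rho>). snd \<omega> j \<notin> unit_steps} \<subseteq> space ?M1 \<times> F"
      by (auto simp: F_def prod_emb_iff space_PiM PiE_iff extensional_def)
  qed
qed

lemma AE_ev_tendsto:
  assumes "prob_space M" "\<And>n. A n \<in> sets M" "AE \<omega> in M. eventually (\<lambda>n. \<omega> \<in> A n) sequentially"
  shows "(\<lambda>n. measure M (A n)) \<longlonglongrightarrow> 1"
proof -
  interpret prob_space M by fact
  have "(\<lambda>n. integral\<^sup>L M (\<lambda>\<omega>. indicator (A n) \<omega> :: real)) \<longlonglongrightarrow> integral\<^sup>L M (\<lambda>_. 1 :: real)"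
  proof (rule integral_dominated_convergence[where w = "\<lambda>_. 1"])
    show "AE x in M. (\<lambda>n. indicator (A n) x :: real) \<longlonglongrightarrow> 1"
      using assms(3)
    proof eventually_elim
      case (elim x)
      then have "\<forall>\<^sub>F n in sequentially. (indicator (A n) x :: real) = 1" by eventually_elim simp
      then show ?case by (rule tendsto_eventually)
    qed
    show "AE x in M. norm (indicator (A n) x :: real) \<le> 1" for n by (auto simp: indicator_def)
  qed (use assms(2) in auto)
  then show ?thesis using assms(2) by (simp add: prob_space)
qed

theorem corollary9:
  fixes \<pi> \<pi>' :: "nat pmf" and A A' :: "(real^'d) set"
  assumes "is_limit_shape \<pi> A" and "is_limit_shape \<pi>' A'" and "pgf_le \<pi> \<pi>'"
  shows "A \<subseteq> A'"
proof
  fix a assume aA: "a \<in> A"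
  show "a \<in> A'"
  proof (rule ccontr)
    assume naA: "a \<notin> A'"
    have cl: "closed A'" using assms(2) by (simp add: is_limit_shape_def)
    obtain \<epsilon> where e: "0 < \<epsilon>" "\<epsilon> < 1" and eb: "\<forall>b\<in>A'. (1 - \<epsilon>) *\<^sub>R a \<noteq> (1 + \<epsilon>) *\<^sub>R b"
      using choose_eps[OF cl naA] by blast
    define p where "p n = (real n * (1 - \<epsilon>)) *\<^sub>R a" for n
    define xn where "xn n = (\<chi> i. \<lceil>p n $ i - 1/2\<rceil>)" for n
    have pc: "p n \<in> cube (xn n)" for n unfolding xn_def by (rule cube_round)
    define V where "V n = enc n -` {z. \<not> vis (xn n) n z}" for n
    have key: "\<omega> \<notin> V n \<longleftrightarrow> xn n \<in> visited (fst \<omega>) (snd \<omega>) n"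
      if u: "\<forall>j. snd \<omega> j \<in> unit_steps" for \<omega> n
    proof -
      have "(\<lambda>j. clampu (snd \<omega> j)) = snd \<omega>" using u by (auto simp: clampu_def)
      then show ?thesis using enc_vis[of "xn n" \<omega> n] by (simp add: V_def)
    qed
    have pn: "(1 / real n) *\<^sub>R p n = (1 - \<epsilon>) *\<^sub>R a" if "n > 0" for n
      using that by (simp add: p_def)
    have ev1: "AE \<omega> in frog_space \<pi>. eventually (\<lambda>n. \<omega> \<notin> V n) sequentially"
    proof -
      have "AE \<omega> in frog_space \<pi>. eventually (\<lambda>n.
            (\<lambda>p. (1 - \<epsilon>) *\<^sub>R p) ` A \<subseteq> (\<lambda>p. (1 / real n) *\<^sub>R p) ` xi (fst \<omega>) (snd \<omega>) n) sequentially"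
      proof -
        from assms(1) e have "AE \<omega> in frog_space \<pi>. eventually (\<lambda>n.
            (\<lambda>p. (1 - \<epsilon>) *\<^sub>R p) ` A \<subseteq> (\<lambda>p. (1 / real n) *\<^sub>R p) ` xi (fst \<omega>) (snd \<omega>) n \<and>
            (\<lambda>p. (1 / real n) *\<^sub>R p) ` xi (fst \<omega>) (snd \<omega>) n \<subseteq> (\<lambda>p. (1 + \<epsilon>) *\<^sub>R p) ` A) sequentially"
          unfolding is_limit_shape_def by blast
        then show ?thesis by eventually_elim (simp add: eventually_conj_iff)
      qed
      then show ?thesis using AE_unit[of \<pi>]
      proof eventually_elim
        case (elim \<omega>)
        have "eventually (\<lambda>n. n > 0) sequentially" by (rule eventually_gt_at_top)
        with elim(1) show ?case
        proof eventually_elim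
          case (elim n)
          have "(1 - \<epsilon>) *\<^sub>R a \<in> (\<lambda>p. (1 / real n) *\<^sub>R p) ` xi (fst \<omega>) (snd \<omega>) n"
            using elim(1) aA by blast
          then obtain q where q: "q \<in> xi (fst \<omega>) (snd \<omega>) n" "(1 - \<epsilon>) *\<^sub>R a = (1 / real n) *\<^sub>R q" by blast
          have "q = real n *\<^sub>R ((1 / real n) *\<^sub>R q)" using elim(2) by simp
          also have "\<dots> = real n *\<^sub>R ((1 - \<epsilon>) *\<^sub>R a)" using q(2) by simp
          also have "\<dots> = p n" by (simp add: p_def)
          finally have "q = p n" .
          with q(1) obtain x where x: "x \<in> visited (fst \<omega>) (snd \<omega>) n" "p n \<in> cube x"
            unfolding xi_def by blast
          have "x = xn n" using cube_unique[OF x(2) pc] .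
          with x(1) show ?case using key \<open>\<forall>j. snd \<omega> j \<in> unit_steps\<close> by blast
        qed
      qed
    qed
    have ev2: "AE \<omega> in frog_space \<pi>'. eventually (\<lambda>n. \<omega> \<in> V n) sequentially"
    proof -
      have "AE \<omega> in frog_space \<pi>'. eventually (\<lambda>n.
            (\<lambda>p. (1 / real n) *\<^sub>R p) ` xi (fst \<omega>) (snd \<omega>) n \<subseteq> (\<lambda>p. (1 + \<epsilon>) *\<^sub>R p) ` A') sequentially"
      proof -
        from assms(2) e have "AE \<omega> in frog_space \<pi>'. eventually (\<lambda>n.
            (\<lambda>p. (1 - \<epsilon>) *\<^sub>R p) ` A' \<subseteq> (\<lambda>p. (1 / real n) *\<^sub>R p) ` xi (fst \<omega>) (snd \<omega>) n \<and>
            (\<lambda>p. (1 / real n) *\<^sub>R p) ` xi (fst \<omega>) (snd \<omega>) n \<subseteq> (\<lambda>p. (1 + \<epsilon>) *\<^sub>R p) ` A') sequentially"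
          unfolding is_limit_shape_def by blast
        then show ?thesis by eventually_elim (simp add: eventually_conj_iff)
      qed
      then show ?thesis using AE_unit[of \<pi>']
      proof eventually_elim
        case (elim \<omega>)
        have "eventually (\<lambda>n. n > 0) sequentially" by (rule eventually_gt_at_top)
        with elim(1) show ?case
        proof eventually_elim
          case (elim n)
          show ?case
          proof (rule ccontr)
            assume "\<omega> \<notin> V n"
            then have "xn n \<in> visited (fst \<omega>) (snd \<omega>) n" using key \<open>\<forall>j. snd \<omega> j \<in> unit_steps\<close> by blast
            then have "p n \<in> xi (fst \<omega>) (snd \<omega>) n" using pc unfolding xi_def by blast
            then have "(1 / real n) *\<^sub>R p n \<in> (\<lambda>p. (1 + \<epsilon>) *\<^sub>R p) ` A'" using elim(1) by blast
            then obtain b where "b \<in> A'" "(1 - \<epsilon>) *\<^sub>R a = (1 + \<epsilon>) *\<^sub>R b" using pn[OF elim(2)] by auto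
            then show False using eb by blast
          qed
        qed
      qed
    qed
    have Vs: "V n \<in> sets (frog_space \<rho>)" for n \<rho> unfolding V_def by (rule bridge(1))
    interpret M: prob_space "frog_space \<pi>" by (rule prob_frog)
    interpret M': prob_space "frog_space \<pi>'" by (rule prob_frog)
    have lim1: "(\<lambda>n. M'.prob (V n)) \<longlonglongrightarrow> 1"
      by (rule AE_ev_tendsto[OF prob_frog Vs ev2])
    have cs: "space (frog_space \<pi>) - V n \<in> sets (frog_space \<pi>)" for n by (rule sets.compl_sets[OF Vs])
    have ae: "AE \<omega> in frog_space \<pi>. eventually (\<lambda>n. \<omega> \<in> space (frog_space \<pi>) - V n) sequentially"
      using ev1 by (simp add: space_frog)
    have "(\<lambda>n. M.prob (space (frog_space \<pi>) - V n)) \<longlonglongrightarrow> 1"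
      by (rule AE_ev_tendsto[OF prob_frog cs ae])
    then have "(\<lambda>n. 1 - M.prob (V n)) \<longlonglongrightarrow> 1" using Vs by (simp add: M.prob_compl)
    then have "(\<lambda>n. 1 - (1 - M.prob (V n))) \<longlonglongrightarrow> 1 - 1" by (intro tendsto_diff tendsto_const)
    then have lim0: "(\<lambda>n. M.prob (V n)) \<longlonglongrightarrow> 0" by simp
    have le: "M'.prob (V n) \<le> M.prob (V n)" for n
    proof -
      have "emeasure (frog_space \<pi>') (V n) \<le> emeasure (frog_space \<pi>) (V n)"
        unfolding V_def bridge(2) by (rule K_le[OF assms(3)])
      then show ?thesis by (simp add: M.emeasure_eq_measure M'.emeasure_eq_measure)
    qed
    have "(1::real) \<le> 0" by (rule LIMSEQ_le[OF lim1 lim0]) (use le in auto)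
    then show False by simp
  qed
qed

end
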